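(* Let $\theta$ be an irrational number whose best rational approximants $(p_n/q_n)_{n\ge0}$ satisfy $q_n^{-1}\log q_{n+1}\to\infty$ as $n\to\infty$. For any subsequence $q'$ of $(q_n)_{n\ge0}$ and any $z\in\mathbb{C}$ with $|z|>1$, there exists a dense $G_\delta$-subset $E(z)$ of $l^\infty$ such that for every $u\in E(z)$, \[\sup_{N\in\mathbb{N}}|\varphi'_{N\theta,q',u}(z)|=+\infty,\] where $\varphi'_{N\theta,q',u}$ denotes the complex derivative of the entire function $\varphi_{N\theta,q',u}$.
   Context: Best rational approximants $p_n/q_n$ of an irrational $\theta$ are its continued fraction convergents, with $\gcd(p_n,q_n)=1$, $q_n\ge0$. A subsequence $q'$ of $(q_n)$ means $q'_n=q_{k_n}$ with $k_n$ strictly increasing. $l^\infty$ is the complex Banach space of bounded complex sequences $u=(u_m)_{m\ge0}$ with the sup norm. For $\mu\in\mathbb{R}$, $\varphi_{\mu,q',u}(z)=z e^{2\pi i\mu}\sum_{n=0}^\infty u_{q'_n}(1-e^{2\pi i q'_n\mu})z^{q'_n}$, where $u_{q'_n}$ is the $q'_n$-th term of $u$; under the growth hypothesis on $(q_n)$, $\varphi_{N\theta,q',u}$ is entire for every integer $N\ge0$. *)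

theory Defs
  imports "HOL-Analysis.Analysis"
begin

fun cf_rem :: "real \<Rightarrow> nat \<Rightarrow> real" where
  "cf_rem x 0 = x"
| "cf_rem x (Suc n) = 1 / frac (cf_rem x n)"

definition cf_a :: "real \<Rightarrow> nat \<Rightarrow> int" where
  "cf_a x n = \<lfloor>cf_rem x n\<rfloor>"

(* Denominators of the convergents p_n/q_n: q_{-1} = 0, q_0 = 1,
  q_{n+1} = a_{n+1} q_n + q_{n-1}. The function below returns (q_n, q_{n-1}). *)
fun cf_qpair :: "real \<Rightarrow> nat \<Rightarrow> int \<times> int" where
  "cf_qpair x 0 = (1, 0)"
| "cf_qpair x (Suc n) = (let (q, q') = cf_qpair x n in (cf_a x (Suc n) * q + q', q))"

definition cf_q :: "real \<Rightarrow> nat \<Rightarrow> nat" where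
  "cf_q x n = nat (fst (cf_qpair x n))"

(* l^\<infinity> is modelled as the Banach space of bounded (continuous) functions
  nat \<Rightarrow>_C complex on the discrete space nat, with the sup norm. *)
type_synonym linfty = "nat \<Rightarrow>\<^sub>C complex"

definition phi :: "real \<Rightarrow> (nat \<Rightarrow> nat) \<Rightarrow> linfty \<Rightarrow> complex \<Rightarrow> complex" where
  "phi \<mu> q' u z = z * cis (2 * pi * \<mu>) *
     (\<Sum>n. apply_bcontfun u (q' n) * (1 - cis (2 * pi * real (q' n) * \<mu>)) * z ^ (q' n))"

end

theory Submission
  imports Defs
begin


lemma frac_irrat: "x \<notin> \<rat> \<Longrightarrow> frac x \<notin> \<rat>"
proof
  assume "x \<notin> \<rat>" "frac x \<in> \<rat>"
  then have "frac x + of_int \<lfloor>x\<rfloor> \<in> \<rat>" by (simp add: Rats_add)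
  then show False using \<open>x \<notin> \<rat>\<close> by (simp add: frac_def)
qed

lemma frac_pos_irrat: "x \<notin> \<rat> \<Longrightarrow> 0 < frac x"
proof -
  assume a: "x \<notin> \<rat>"
  have "frac x \<noteq> 0" using a frac_eq_0_iff Ints_subset_Rats by blast
  then show ?thesis using frac_ge_0[of x] by linarith
qed

lemma cf_rem_irrat: "\<theta> \<notin> \<rat> \<Longrightarrow> cf_rem \<theta> n \<notin> \<rat>"
proof (induction n)
  case 0 then show ?case by simp
next
  case (Suc n)
  have f: "frac (cf_rem \<theta> n) \<notin> \<rat>" using Suc frac_irrat by blast
  show ?case
  proof
    assume "cf_rem \<theta> (Suc n) \<in> \<rat>"
    then have "1 / cf_rem \<theta> (Suc n) \<in> \<rat>" by (intro Rats_divide Rats_1)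
    moreover have "1 / cf_rem \<theta> (Suc n) = frac (cf_rem \<theta> n)" by (simp only: cf_rem.simps) simp
    ultimately show False using f by metis
  qed
qed

lemma cf_rem_gt1: "\<theta> \<notin> \<rat> \<Longrightarrow> cf_rem \<theta> (Suc n) > 1"
proof -
  assume a: "\<theta> \<notin> \<rat>"
  have "0 < frac (cf_rem \<theta> n)" using frac_pos_irrat cf_rem_irrat a by blast
  moreover have "frac (cf_rem \<theta> n) < 1" by (rule frac_lt_1)
  ultimately show ?thesis by (simp add: less_divide_eq cf_rem.simps)
qed

declare cf_rem.simps(2)[simp del]

lemma cf_a_ge1: "\<theta> \<notin> \<rat> \<Longrightarrow> cf_a \<theta> (Suc n) \<ge> 1"
  using cf_rem_gt1[of \<theta> n] unfolding cf_a_def by (simp add: le_floor_iff)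

lemma qpair_Suc[simp]: "cf_qpair x (Suc n) = (cf_a x (Suc n) * fst (cf_qpair x n) + snd (cf_qpair x n), fst (cf_qpair x n))"
  by (simp add: split_def Let_def)

declare cf_qpair.simps(2)[simp del]

lemma qpair_inv:
  assumes "\<theta> \<notin> \<rat>"
  shows "fst (cf_qpair \<theta> n) \<ge> int n \<and> fst (cf_qpair \<theta> n) \<ge> 1 \<and> snd (cf_qpair \<theta> n) \<ge> 0 \<and> (n \<ge> 1 \<longrightarrow> snd (cf_qpair \<theta> n) \<ge> 1)"
proof (induction n)
  case 0 then show ?case by simp
next
  case (Suc n)
  have a: "cf_a \<theta> (Suc n) \<ge> 1" using cf_a_ge1 assms by blast
  let ?q = "fst (cf_qpair \<theta> n)" and ?r = "snd (cf_qpair \<theta> n)"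
  have h: "cf_a \<theta> (Suc n) * ?q \<ge> ?q" using a Suc by (simp add: mult_le_cancel_right1)
  have aux: "\<And>(p::int) q r. p \<ge> q \<Longrightarrow> q \<ge> int n \<Longrightarrow> q \<ge> 1 \<Longrightarrow> r \<ge> 0 \<Longrightarrow> (n \<ge> 1 \<longrightarrow> r \<ge> 1) \<Longrightarrow>
     p + r \<ge> int (Suc n) \<and> p+r \<ge> 1 \<and> q \<ge> 0 \<and> (Suc n \<ge> 1 \<longrightarrow> q \<ge> 1)"
    by (cases "n = 0") auto
  show ?case unfolding qpair_Suc fst_conv snd_conv using aux[OF h] Suc by blast
qed

lemma qpair_strict:
  assumes "\<theta> \<notin> \<rat>" "n \<ge> 1"
  shows "fst (cf_qpair \<theta> (Suc n)) > fst (cf_qpair \<theta> n)"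
proof -
  have a: "cf_a \<theta> (Suc n) \<ge> 1" using cf_a_ge1 assms by blast
  let ?q = "fst (cf_qpair \<theta> n)" and ?r = "snd (cf_qpair \<theta> n)"
  have h: "cf_a \<theta> (Suc n) * ?q \<ge> ?q" using a qpair_inv[OF assms(1), of n] by (simp add: mult_le_cancel_right1)
  have "?r \<ge> 1" using qpair_inv[OF assms(1), of n] assms by blast
  then show ?thesis using h by (simp only: qpair_Suc fst_conv)
qed

lemma cf_q_real: "\<theta> \<notin> \<rat> \<Longrightarrow> real (cf_q \<theta> n) = real_of_int (fst (cf_qpair \<theta> n))"
  using qpair_inv[of \<theta> n] unfolding cf_q_def by simp

lemma cf_q_ge: "\<theta> \<notin> \<rat> \<Longrightarrow> cf_q \<theta> n \<ge> n \<and> cf_q \<theta> n \<ge> 1"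
  using qpair_inv[of \<theta> n] unfolding cf_q_def by linarith

lemma cf_q_strict: "\<theta> \<notin> \<rat> \<Longrightarrow> n \<ge> 1 \<Longrightarrow> cf_q \<theta> n < cf_q \<theta> (Suc n)"
  using qpair_strict[of \<theta> n] qpair_inv[of \<theta> n] unfolding cf_q_def by linarith

fun cf_epair :: "real \<Rightarrow> nat \<Rightarrow> real \<times> real" where
  "cf_epair x 0 = (x - of_int (cf_a x 0), -1)"
| "cf_epair x (Suc n) = (of_int (cf_a x (Suc n)) * fst (cf_epair x n) + snd (cf_epair x n), fst (cf_epair x n))"

lemma epair_inv:
  assumes irr: "\<theta> \<notin> \<rat>"
  shows "fst (cf_epair \<theta> n) - of_int (fst (cf_qpair \<theta> n)) * \<theta> \<in> \<int> \<and>
         snd (cf_epair \<theta> n) - of_int (snd (cf_qpair \<theta> n)) * \<theta> \<in> \<int> \<and>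
         snd (cf_epair \<theta> n) = - cf_rem \<theta> (Suc n) * fst (cf_epair \<theta> n) \<and>
         \<bar>fst (cf_epair \<theta> n)\<bar> * (of_int (fst (cf_qpair \<theta> n)) * cf_rem \<theta> (Suc n) + of_int (snd (cf_qpair \<theta> n))) = 1"
proof (induction n)
  case 0
  have fp: "0 < frac \<theta>" using frac_pos_irrat irr by blast
  have e0: "\<theta> - of_int (cf_a \<theta> 0) = frac \<theta>" by (simp add: cf_a_def frac_def)
  have x1: "cf_rem \<theta> (Suc 0) = 1 / frac \<theta>" by (simp add: cf_rem.simps)
  have f0: "fst (cf_epair \<theta> 0) = frac \<theta>" "snd (cf_epair \<theta> 0) = -1" using e0 by simp_all
  have "frac \<theta> - \<theta> \<in> \<int>" by (simp add: frac_def)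
  then show ?case unfolding f0 x1 using fp by simp
next
  case (Suc n)
  let ?e = "fst (cf_epair \<theta> n)" and ?e' = "snd (cf_epair \<theta> n)"
  let ?q = "fst (cf_qpair \<theta> n)" and ?r = "snd (cf_qpair \<theta> n)"
  let ?a = "cf_a \<theta> (Suc n)" and ?x = "cf_rem \<theta> (Suc n)"
  have fp: "0 < frac ?x" using frac_pos_irrat cf_rem_irrat irr by blast
  have fx: "frac ?x = ?x - of_int ?a" by (simp add: cf_a_def frac_def)
  have x2: "cf_rem \<theta> (Suc (Suc n)) = 1 / frac ?x" by (simp add: cf_rem.simps)
  have I1: "?e - of_int ?q * \<theta> \<in> \<int>" and I2: "?e' - of_int ?r * \<theta> \<in> \<int>"
    and I3: "?e' = - ?x * ?e" and I4: "\<bar>?e\<bar> * (of_int ?q * ?x + of_int ?r) = 1" using Suc by auto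
  have newe: "fst (cf_epair \<theta> (Suc n)) = - frac ?x * ?e"
    using I3 by (simp add: fx algebra_simps)
  have c1: "fst (cf_epair \<theta> (Suc n)) - of_int (fst (cf_qpair \<theta> (Suc n))) * \<theta>
     = of_int ?a * (?e - of_int ?q * \<theta>) + (?e' - of_int ?r * \<theta>)"
    by (simp add: qpair_Suc algebra_simps)
  have "of_int ?a * (?e - of_int ?q * \<theta>) \<in> \<int>" using I1 by (simp add: Ints_mult)
  then have C1: "fst (cf_epair \<theta> (Suc n)) - of_int (fst (cf_qpair \<theta> (Suc n))) * \<theta> \<in> \<int>"
    unfolding c1 by (rule Ints_add[OF _ I2])
  have C2: "snd (cf_epair \<theta> (Suc n)) - of_int (snd (cf_qpair \<theta> (Suc n))) * \<theta> \<in> \<int>"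
    using I1 by (simp add: qpair_Suc)
  have C3: "snd (cf_epair \<theta> (Suc n)) = - cf_rem \<theta> (Suc (Suc n)) * fst (cf_epair \<theta> (Suc n))"
    using fp by (simp only: newe x2) (simp add: field_simps)
  have "\<bar>fst (cf_epair \<theta> (Suc n))\<bar> * (of_int (fst (cf_qpair \<theta> (Suc n))) * cf_rem \<theta> (Suc (Suc n)) + of_int (snd (cf_qpair \<theta> (Suc n))))
      = \<bar>?e\<bar> * frac ?x * ((of_int ?a * of_int ?q + of_int ?r) / frac ?x + of_int ?q)"
    using fp by (simp only: newe x2 qpair_Suc fst_conv snd_conv) (simp add: abs_mult field_simps)
  also have "\<dots> = \<bar>?e\<bar> * (of_int ?a * of_int ?q + of_int ?r + of_int ?q * frac ?x)"
    using fp by (simp add: field_simps)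
  also have "\<dots> = \<bar>?e\<bar> * (of_int ?q * ?x + of_int ?r)" by (simp add: fx algebra_simps)
  also have "\<dots> = 1" by (rule I4)
  finally show ?case using C1 C2 C3 by blast
qed

lemma cf_approx:
  assumes irr: "\<theta> \<notin> \<rat>"
  shows "\<exists>p::int. \<bar>real (cf_q \<theta> n) * \<theta> - of_int p\<bar> \<le> 1 / real (cf_q \<theta> (Suc n))"
proof -
  let ?e = "fst (cf_epair \<theta> n)"
  let ?q = "fst (cf_qpair \<theta> n)" and ?r = "snd (cf_qpair \<theta> n)"
  let ?a = "cf_a \<theta> (Suc n)" and ?x = "cf_rem \<theta> (Suc n)"
  from epair_inv[OF irr, of n] obtain m where m: "?e - of_int ?q * \<theta> = of_int m"
    and I4: "\<bar>?e\<bar> * (of_int ?q * ?x + of_int ?r) = 1" by (auto elim!: Ints_cases)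
  have ax: "of_int ?a \<le> ?x" unfolding cf_a_def by simp
  have qi: "?q \<ge> 1" "?r \<ge> 0" using qpair_inv[OF irr, of n] by auto
  have "real_of_int (fst (cf_qpair \<theta> (Suc n))) = of_int ?a * of_int ?q + of_int ?r"
    by (simp add: qpair_Suc)
  also have "\<dots> \<le> of_int ?q * ?x + of_int ?r" using ax qi by (simp add: mult.commute mult_left_mono)
  finally have le: "real (cf_q \<theta> (Suc n)) \<le> of_int ?q * ?x + of_int ?r" using cf_q_real[OF irr] by simp
  have pos: "real (cf_q \<theta> (Suc n)) > 0" using cf_q_ge[OF irr, of "Suc n"] by simp
  have "of_int ?q * ?x + of_int ?r \<noteq> 0" using I4 by auto
  then have "\<bar>?e\<bar> = 1 / (of_int ?q * ?x + of_int ?r)" using I4 by (simp add: field_simps)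
  also have "\<dots> \<le> 1 / real (cf_q \<theta> (Suc n))" using le pos by (simp add: frac_le)
  finally have "\<bar>?e\<bar> \<le> 1 / real (cf_q \<theta> (Suc n))" .
  moreover have "real (cf_q \<theta> n) * \<theta> - of_int (-m) = ?e" using m cf_q_real[OF irr, of n] by simp
  ultimately show ?thesis by metis
qed



lemma norm_1_cis: "norm (1 - cis x) = 2 * \<bar>sin (x/2)\<bar>"
proof -
  have "1 - cis x = cis (x/2) * (- 2 * \<i> * complex_of_real (sin (x/2)))"
    using cos_double_sin[of "x/2"] sin_double[of "x/2"]
    by (simp add: complex_eq_iff algebra_simps power2_eq_square)
  then have "norm (1 - cis x) = norm (- 2 * \<i> * complex_of_real (sin (x/2)))"
    by (simp add: norm_mult)
  also have "\<dots> = 2 * \<bar>sin (x/2)\<bar>" by (simp add: norm_mult)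
  finally show ?thesis .
qed

lemma norm_1_cis_le: "norm (1 - cis x) \<le> \<bar>x\<bar>"
  using abs_sin_x_le_abs_x[of "x/2"] by (simp add: norm_1_cis)

lemma cis_shift: "m \<in> \<int> \<Longrightarrow> cis (2*pi*(m + y)) = cis (2*pi*y)"
proof -
  assume "m \<in> \<int>"
  have "cis (2*pi*(m + y)) = cis (2*pi*m) * cis (2*pi*y)" by (simp add: cis_mult algebra_simps)
  then show ?thesis using \<open>m \<in> \<int>\<close> by simp
qed

lemma small_mult: 
  fixes a :: real
  assumes "0 < a" "a \<le> 1/2"
  shows "\<exists>N::nat. 1/6 \<le> real N * a \<and> real N * a \<le> 1/2"
proof (cases "a \<ge> 1/6")
  case True then show ?thesis using assms by (intro exI[of _ 1]) simp
next
  case False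
  define c where "c = \<lceil>1/(6*a)\<rceil>"
  have c1: "of_int c \<ge> 1/(6*a)" unfolding c_def by simp
  have c2: "of_int c < 1/(6*a) + 1" unfolding c_def by linarith
  have cpos: "c \<ge> 0" using c1 assms by (smt (verit) divide_pos_pos of_int_0_le_iff)
  have "1/6 \<le> of_int c * a" using c1 assms by (simp add: field_simps)
  moreover have "of_int c * a < (1/(6*a) + 1) * a" using c2 assms by (simp add: mult_strict_right_mono)
  moreover have "(1/(6*a) + 1) * a = 1/6 + a" using assms by (simp add: field_simps)
  ultimately have "1/6 \<le> real (nat c) * a \<and> real (nat c) * a \<le> 1/2" using False cpos by simp
  then show ?thesis by blast
qed

lemma big_sin:
  fixes y :: real
  assumes "0 < frac y" "frac y \<le> 1/2"
  shows "\<exists>N::nat. norm (1 - cis (2*pi*(real N * y))) \<ge> 1"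
proof -
  obtain N :: nat where N: "1/6 \<le> real N * frac y" "real N * frac y \<le> 1/2"
    using small_mult[OF assms] by blast
  have "real N * y = of_int (int N * \<lfloor>y\<rfloor>) + real N * frac y" by (simp add: frac_def algebra_simps)
  then have "cis (2*pi*(real N * y)) = cis (2*pi*(real N * frac y))"
    using cis_shift[of "of_int (int N * \<lfloor>y\<rfloor>)"] by simp
  then have "norm (1 - cis (2*pi*(real N * y))) = 2 * \<bar>sin (pi * (real N * frac y))\<bar>"
    by (simp add: norm_1_cis)
  moreover have "sin (pi/6) \<le> sin (pi * (real N * frac y))"
  proof -
    have a: "pi * (1/6) \<le> pi * (real N * frac y)" using N by (intro mult_left_mono) auto
    have b: "pi * (real N * frac y) \<le> pi * (1/2)" using N by (intro mult_left_mono) auto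
    have c: "-(pi/2) \<le> pi * (real N * frac y)" "pi * (real N * frac y) \<le> pi/2" "pi/6 \<le> pi * (real N * frac y)"
      using a b pi_gt_zero by linarith+
    show ?thesis by (rule iffD2[OF sin_mono_le_eq]) (use c pi_gt_zero in linarith)+
  qed
  ultimately have "norm (1 - cis (2*pi*(real N * y))) \<ge> 1" by (simp add: sin_30)
  then show ?thesis by blast
qed

lemma big_cis:
  fixes x :: real
  assumes "x \<notin> \<int>"
  shows "\<exists>N::nat. norm (1 - cis (2*pi*(real N * x))) \<ge> 1"
proof (cases "frac x \<le> 1/2")
  case True
  have "0 < frac x" using assms frac_eq_0_iff frac_ge_0 by (metis less_eq_real_def)
  then show ?thesis using big_sin True by blast
next
  case False
  have fn: "frac (-x) = 1 - frac x" using assms by (simp add: frac_neg)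
  have "0 < frac (-x)" "frac (-x) \<le> 1/2" using False frac_lt_1[of x] fn by auto
  then obtain N :: nat where "norm (1 - cis (2*pi*(real N * (-x)))) \<ge> 1" using big_sin by blast
  then show ?thesis by (intro exI[of _ N]) (simp add: norm_1_cis)
qed


lemma linfty_complete: "complete (UNIV :: (nat \<Rightarrow>\<^sub>C complex) set)"
  unfolding complete_def
proof (intro allI impI)
  fix f :: "nat \<Rightarrow> nat \<Rightarrow>\<^sub>C complex"
  assume "(\<forall>n. f n \<in> UNIV) \<and> Cauchy f"
  then have "Cauchy f" by simp
  then obtain g where "uniform_limit UNIV f g sequentially"
    using uniformly_convergent_eq_cauchy[of "\<lambda>_. True" f]
    unfolding Cauchy_def uniform_limit_sequentially_iff
    by (metis dist_fun_lt_imp_dist_val_lt)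
  from uniform_limit_bcontfunE[OF this sequentially_bot]
  obtain l' where "g = apply_bcontfun l'" "(f \<longlonglongrightarrow> l')" by metis
  then show "\<exists>l\<in>UNIV. f \<longlonglongrightarrow> l" by blast
qed

lemma linfty_cms: "completely_metrizable_space (euclidean :: (nat \<Rightarrow>\<^sub>C complex) topology)"
  using Met_TC.completely_metrizable_space_mtopology linfty_complete by auto


lemma cfq_lt: "\<theta> \<notin> \<rat> \<Longrightarrow> 1 \<le> i \<Longrightarrow> i < j \<Longrightarrow> cf_q \<theta> i < cf_q \<theta> j"
proof (induction j)
  case 0 then show ?case by simp
next
  case (Suc j)
  then show ?case using cf_q_strict[of \<theta> j]
    by (cases "i = j") (auto intro: less_trans)
qed

lemma cfq_0: "cf_q \<theta> 0 = 1" by (simp add: cf_q_def)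

context
  fixes \<theta> :: real and k :: "nat \<Rightarrow> nat"
  assumes irr: "\<theta> \<notin> \<rat>"
    and growth: "filterlim (\<lambda>n. ln (real (cf_q \<theta> (Suc n))) / real (cf_q \<theta> n)) at_top sequentially"
    and sub: "strict_mono k"
begin

lemma Q_ge: "cf_q \<theta> (k n) \<ge> n" "cf_q \<theta> (k n) \<ge> 1"
  using cf_q_ge[OF irr, of "k n"] seq_suble[OF sub, of n] by auto

lemma Q_inj2:
  assumes "2 \<le> m" "cf_q \<theta> (k n) = cf_q \<theta> (k m)"
  shows "n = m"
proof -
  have km: "k m \<ge> 2" using seq_suble[OF sub, of m] assms by linarith
  have "k n = k m"
  proof (rule ccontr)
    assume ne: "k n \<noteq> k m"
    show False
    proof (cases "k n = 0")
      case True
      have "cf_q \<theta> 1 < cf_q \<theta> (k m)" using cfq_lt[OF irr, of 1 "k m"] km by simp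
      moreover have "cf_q \<theta> 1 \<ge> 1" using cf_q_ge[OF irr, of 1] by simp
      ultimately show False using assms True cfq_0 by simp
    next
      case False
      then show False using ne assms cfq_lt[OF irr, of "k n" "k m"] cfq_lt[OF irr, of "k m" "k n"] km
        by (cases "k n < k m") auto
    qed
  qed
  then show ?thesis using strict_mono_eq[OF sub] by blast
qed

lemma ev_big: "eventually (\<lambda>n. exp (C * real (cf_q \<theta> (k n))) \<le> real (cf_q \<theta> (Suc (k n)))) sequentially"
proof -
  have "eventually (\<lambda>m. ln (real (cf_q \<theta> (Suc m))) / real (cf_q \<theta> m) \<ge> C) sequentially"
    using growth by (simp add: filterlim_at_top)
  then have "eventually (\<lambda>m. exp (C * real (cf_q \<theta> m)) \<le> real (cf_q \<theta> (Suc m))) sequentially"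
  proof (rule eventually_mono)
    fix m assume h: "ln (real (cf_q \<theta> (Suc m))) / real (cf_q \<theta> m) \<ge> C"
    have p1: "real (cf_q \<theta> m) > 0" "real (cf_q \<theta> (Suc m)) > 0" using cf_q_ge[OF irr, of m] cf_q_ge[OF irr, of "Suc m"] by auto
    have "C * real (cf_q \<theta> m) \<le> ln (real (cf_q \<theta> (Suc m)))" using h p1 by (simp add: field_simps)
    then have "exp (C * real (cf_q \<theta> m)) \<le> exp (ln (real (cf_q \<theta> (Suc m))))" by simp
    then show "exp (C * real (cf_q \<theta> m)) \<le> real (cf_q \<theta> (Suc m))" using p1 by simp
  qed
  then show ?thesis using eventually_compose_filterlim filterlim_subseq[OF sub] by blast
qed

lemma A_bound:
  "norm (1 - cis (2*pi*real (cf_q \<theta> (k n))*(real N * \<theta>))) \<le> 2*pi*real N / real (cf_q \<theta> (Suc (k n)))"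
proof -
  let ?q = "real (cf_q \<theta> (k n))" and ?q' = "real (cf_q \<theta> (Suc (k n)))"
  obtain p :: int where p: "\<bar>?q * \<theta> - of_int p\<bar> \<le> 1 / ?q'" using cf_approx[OF irr] by blast
  have e: "2*pi*?q*(real N * \<theta>) = 2*pi*(of_int (int N * p) + real N * (?q * \<theta> - of_int p))"
    by (simp add: algebra_simps)
  have "cis (2*pi*?q*(real N * \<theta>)) = cis (2*pi*(of_int (int N * p) + real N * (?q * \<theta> - of_int p)))"
    unfolding e ..
  also have "\<dots> = cis (2*pi*(real N * (?q * \<theta> - of_int p)))"
    by (rule cis_shift) simp
  finally have "cis (2*pi*?q*(real N * \<theta>)) = cis (2*pi*(real N * (?q * \<theta> - of_int p)))" .
  then have "norm (1 - cis (2*pi*?q*(real N * \<theta>))) \<le> \<bar>2*pi*(real N * (?q * \<theta> - of_int p))\<bar>"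
    using norm_1_cis_le by metis
  also have "\<dots> = 2*pi*real N * \<bar>?q * \<theta> - of_int p\<bar>" by (simp add: abs_mult)
  also have "\<dots> \<le> 2*pi*real N * (1 / ?q')" using p by (intro mult_left_mono) auto
  finally show ?thesis by simp
qed

lemma summ:
  assumes R: "R \<ge> 1"
  shows "summable (\<lambda>n. norm (1 - cis (2*pi*real (cf_q \<theta> (k n))*(real N * \<theta>))) * (real (cf_q \<theta> (k n)) + 1) * R ^ cf_q \<theta> (k n))"
proof (rule summable_comparison_test_ev)
  show "summable (\<lambda>n. 2*pi*real N * exp (-1) ^ n)"
    by (intro summable_mult summable_geometric) simp
  show "eventually (\<lambda>n. norm (norm (1 - cis (2*pi*real (cf_q \<theta> (k n))*(real N * \<theta>))) * (real (cf_q \<theta> (k n)) + 1) * R ^ cf_q \<theta> (k n))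
        \<le> 2*pi*real N * exp (-1) ^ n) sequentially"
    using ev_big[of "ln R + 2"]
  proof (rule eventually_mono)
    fix n
    let ?Q = "cf_q \<theta> (k n)" let ?q = "real ?Q" and ?q' = "real (cf_q \<theta> (Suc (k n)))"
    let ?A = "norm (1 - cis (2*pi*?q*(real N * \<theta>)))"
    assume h: "exp ((ln R + 2) * ?q) \<le> ?q'"
    have Rpow: "R ^ ?Q = exp (?q * ln R)" using R by (simp add: exp_of_nat_mult)
    have ep: "exp ((ln R + 2) * ?q) > 0" by simp
    have K: "2*pi*real N \<ge> 0" by simp
    have qp: "?q' > 0" using cf_q_ge[OF irr, of "Suc (k n)"] by simp
    have "?A \<le> 2*pi*real N / ?q'" by (rule A_bound)
    also have "\<dots> \<le> 2*pi*real N / exp ((ln R + 2) * ?q)" using h ep K qp by (intro divide_left_mono) auto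
    finally have A: "?A \<le> 2*pi*real N / exp ((ln R + 2) * ?q)" .
    have "norm (?A * (?q + 1) * R ^ ?Q) = ?A * (?q + 1) * R ^ ?Q" using R by simp
    also have "\<dots> \<le> 2*pi*real N / exp ((ln R + 2) * ?q) * (?q + 1) * R ^ ?Q"
      using A R by (intro mult_right_mono) auto
    also have "\<dots> = 2*pi*real N * ((?q + 1) * exp (- 2 * ?q))"
      unfolding Rpow by (simp add: field_simps exp_add[symmetric] exp_diff[symmetric])
    also have "\<dots> \<le> 2*pi*real N * (exp ?q * exp (- 2 * ?q))"
      using exp_ge_add_one_self[of ?q] K by (intro mult_left_mono mult_right_mono) (auto simp: add.commute)
    also have "\<dots> = 2*pi*real N * exp (- ?q)" by (simp add: exp_add[symmetric])
    also have "\<dots> \<le> 2*pi*real N * exp (- real n)" using Q_ge(1)[of n] K by (intro mult_left_mono) auto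
    also have "\<dots> = 2*pi*real N * exp (-1) ^ n" by (simp add: exp_of_nat_mult[symmetric])
    finally show "norm (?A * (?q + 1) * R ^ ?Q) \<le> 2*pi*real N * exp (-1) ^ n" .
  qed
qed


lemma deriv_phi:
  fixes z :: complex and u :: linfty
  assumes z: "norm z > 1"
  shows "summable (\<lambda>n. apply_bcontfun u (cf_q \<theta> (k n)) * ((1 - cis (2*pi*real (cf_q \<theta> (k n))*(real N*\<theta>))) * of_nat (cf_q \<theta> (k n) + 1) * z ^ cf_q \<theta> (k n)))"
    "deriv (phi (real N * \<theta>) (\<lambda>n. cf_q \<theta> (k n)) u) z =
     cis (2*pi*(real N*\<theta>)) * (\<Sum>n. apply_bcontfun u (cf_q \<theta> (k n)) * ((1 - cis (2*pi*real (cf_q \<theta> (k n))*(real N*\<theta>))) * of_nat (cf_q \<theta> (k n) + 1) * z ^ cf_q \<theta> (k n)))"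
proof -
  define Q where "Q n = cf_q \<theta> (k n)" for n
  define A where "A n = 1 - cis (2*pi*real (Q n)*(real N*\<theta>))" for n
  define a where "a n = apply_bcontfun u (Q n) * A n" for n
  define R where "R = norm z + 1"
  define S where "S = ball (0::complex) R"
  define f where "f n w = a n * w ^ Q n" for n w
  define f' where "f' n w = a n * (of_nat (Q n) * w ^ (Q n - 1))" for n w
  define c where "c = cis (2*pi*(real N*\<theta>))"
  have Qge1: "Q n \<ge> 1" for n unfolding Q_def using Q_ge(2) .
  have R1: "R \<ge> 1" unfolding R_def by simp
  have sumA: "summable (\<lambda>n. norm (A n) * (real (Q n) + 1) * R ^ Q n)"
    unfolding A_def Q_def using summ[OF R1] .
  have ua: "norm (apply_bcontfun u m) \<le> norm u" for m by (rule norm_bounded)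
  have bnd: "norm (f' n w) \<le> norm u * (norm (A n) * (real (Q n) + 1) * R ^ Q n)" if w: "w \<in> S" for n w
  proof -
    have wR: "norm w \<le> R" using w unfolding S_def by simp
    have "norm w ^ (Q n - 1) \<le> R ^ (Q n - 1)" using wR by (intro power_mono) auto
    also have "\<dots> \<le> R ^ Q n" using R1 by (intro power_increasing) auto
    finally have p: "norm w ^ (Q n - 1) \<le> R ^ Q n" .
    have "norm (f' n w) = norm (apply_bcontfun u (Q n)) * (norm (A n) * (real (Q n) * norm w ^ (Q n - 1)))"
      unfolding f'_def a_def by (simp add: norm_mult norm_power)
    also have "\<dots> \<le> norm u * (norm (A n) * ((real (Q n) + 1) * R ^ Q n))"
      using ua p by (intro mult_mono mult_left_mono) auto
    finally show ?thesis by (simp add: mult.assoc)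
  qed
  have unif: "uniformly_convergent_on S (\<lambda>n x. \<Sum>i<n. f' i x)"
    by (rule Weierstrass_m_test'[OF bnd]) (auto intro: summable_mult sumA)
  have der: "(f n has_field_derivative f' n x) (at x within S)" for n x
    unfolding f_def f'_def by (auto intro!: derivative_eq_intros)
  have s0: "summable (\<lambda>n. f n 0)"
  proof -
    have Qne: "Q n \<noteq> 0" for n using Qge1[of n] by linarith
    have "(\<lambda>n. f n 0) = (\<lambda>n. 0)" by (simp add: f_def power_0_left Qne)
    then show ?thesis by simp
  qed
  have zS: "z \<in> interior S" unfolding S_def R_def by simp
  have conv: "convex S" unfolding S_def by simp
  have zero: "0 \<in> S" proof -
    have "0 < norm z + 1" using norm_ge_zero[of z] by linarith
    then show ?thesis unfolding S_def R_def by simp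
  qed
  note res = has_field_derivative_series'[OF conv der unif zero s0 zS]
  have zS': "z \<in> S" using zS interior_subset by blast
  have sf': "summable (\<lambda>n. f' n z)"
    by (rule summable_comparison_test[OF _ summable_mult[OF sumA, of "norm u"]]) (use bnd[OF zS'] in auto)
  have phieq: "phi (real N * \<theta>) (\<lambda>n. cf_q \<theta> (k n)) u = (\<lambda>w. (w * c) * (\<Sum>n. f n w))"
    by (rule ext) (simp add: phi_def f_def a_def A_def Q_def c_def)
  have D: "((\<lambda>w. (w * c) * (\<Sum>n. f n w)) has_field_derivative (c * (\<Sum>n. f n z) + (z * c) * (\<Sum>n. f' n z))) (at z)"
    by (rule DERIV_cong[OF DERIV_mult[OF DERIV_cmult_right[OF DERIV_ident] res(2)]]) (simp add: algebra_simps)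
  have trm: "f n z + z * f' n z = apply_bcontfun u (Q n) * (A n * of_nat (Q n + 1) * z ^ Q n)" for n
  proof -
    have "z * z ^ (Q n - 1) = z ^ Q n" using Qge1[of n] by (simp add: power_eq_if)
    then show ?thesis unfolding f_def f'_def a_def by (simp add: algebra_simps)
  qed
  have "(\<Sum>n. f n z) + z * (\<Sum>n. f' n z) = (\<Sum>n. f n z + z * f' n z)"
    using suminf_add[OF res(1) summable_mult[OF sf', of z]] suminf_mult[OF sf', of z] by simp
  also have "\<dots> = (\<Sum>n. apply_bcontfun u (Q n) * (A n * of_nat (Q n + 1) * z ^ Q n))" by (simp only: trm)
  finally have fin: "(\<Sum>n. f n z) + z * (\<Sum>n. f' n z) = (\<Sum>n. apply_bcontfun u (Q n) * (A n * of_nat (Q n + 1) * z ^ Q n))" .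
  have "summable (\<lambda>n. f n z + z * f' n z)" by (intro summable_add res(1) summable_mult sf')
  then show "summable (\<lambda>n. apply_bcontfun u (cf_q \<theta> (k n)) * ((1 - cis (2*pi*real (cf_q \<theta> (k n))*(real N*\<theta>))) * of_nat (cf_q \<theta> (k n) + 1) * z ^ cf_q \<theta> (k n)))"
    by (simp only: trm) (simp add: Q_def A_def)
  have "deriv (phi (real N * \<theta>) (\<lambda>n. cf_q \<theta> (k n)) u) z = c * (\<Sum>n. f n z) + (z * c) * (\<Sum>n. f' n z)"
    unfolding phieq by (rule DERIV_imp_deriv[OF D])
  also have "\<dots> = c * ((\<Sum>n. f n z) + z * (\<Sum>n. f' n z))" by (simp add: algebra_simps)
  finally show "deriv (phi (real N * \<theta>) (\<lambda>n. cf_q \<theta> (k n)) u) z =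
     cis (2*pi*(real N*\<theta>)) * (\<Sum>n. apply_bcontfun u (cf_q \<theta> (k n)) * ((1 - cis (2*pi*real (cf_q \<theta> (k n))*(real N*\<theta>))) * of_nat (cf_q \<theta> (k n) + 1) * z ^ cf_q \<theta> (k n)))"
    unfolding fin by (simp add: c_def Q_def A_def)
qed


lemma main_ctx:
  fixes z :: complex
  assumes z: "norm z > 1"
  shows "\<exists>E :: linfty set. gdelta_in euclidean E \<and> closure E = UNIV \<and>
           (\<forall>u\<in>E. \<forall>B::real. \<exists>N::nat.
              norm (deriv (phi (real N * \<theta>) (\<lambda>n. cf_q \<theta> (k n)) u) z) > B)"
proof -
  define Q where "Q n = cf_q \<theta> (k n)" for n
  define A where "A N n = 1 - cis (2*pi*real (Q n)*(real N*\<theta>))" for N n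
  define b where "b N n = A N n * of_nat (Q n + 1) * z ^ Q n" for N n
  define c where "c N = cis (2*pi*(real N*\<theta>))" for N
  define L where "L N u = c N * (\<Sum>n. apply_bcontfun u (Q n) * b N n)" for N and u :: linfty
  define K where "K N = (\<Sum>n. norm (b N n))" for N
  have Qge: "Q n \<ge> n" "Q n \<ge> 1" for n unfolding Q_def using Q_ge by auto
  have Dl: "deriv (phi (real N * \<theta>) (\<lambda>n. cf_q \<theta> (k n)) u) z = L N u" for N u
    unfolding L_def c_def b_def A_def Q_def using deriv_phi(2)[OF z] by simp
  have sb: "summable (\<lambda>n. apply_bcontfun u (Q n) * b N n)" for N u
    unfolding b_def A_def Q_def using deriv_phi(1)[OF z] by simp
  have nb: "norm (b N n) = norm (A N n) * (real (Q n) + 1) * norm z ^ Q n" for N n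
  proof -
    have "norm (of_nat (Q n + 1) :: complex) = real (Q n) + 1" by (simp only: norm_of_nat)
    then show ?thesis unfolding b_def by (simp only: norm_mult norm_power)
  qed
  have snb: "summable (\<lambda>n. norm (b N n))" for N
    unfolding nb A_def Q_def using summ[of "norm z" N] z by simp
  have K0: "K N \<ge> 0" for N unfolding K_def by (intro suminf_nonneg snb) simp
  have nc: "norm (c N) = 1" for N unfolding c_def by simp
  have Ldiff: "L N u - L N v = c N * (\<Sum>n. (apply_bcontfun u (Q n) - apply_bcontfun v (Q n)) * b N n)" for N u v
    unfolding L_def using suminf_diff[OF sb[of u N] sb[of v N]] by (simp add: algebra_simps)
  have Llip: "dist (L N u) (L N v) \<le> K N * dist u v" for N u v
  proof -
    let ?g = "\<lambda>n. (apply_bcontfun u (Q n) - apply_bcontfun v (Q n)) * b N n"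
    have gle: "norm (?g n) \<le> dist u v * norm (b N n)" for n
    proof -
      have "norm (apply_bcontfun u (Q n) - apply_bcontfun v (Q n)) = norm (apply_bcontfun (u - v) (Q n))" by simp
      also have "\<dots> \<le> norm (u - v)" by (rule norm_bounded)
      finally show ?thesis by (simp add: norm_mult dist_norm mult_right_mono)
    qed
    have sg: "summable (\<lambda>n. dist u v * norm (b N n))" by (intro summable_mult snb)
    have sng: "summable (\<lambda>n. norm (?g n))" by (rule summable_comparison_test[OF _ sg]) (use gle in auto)
    have "dist (L N u) (L N v) = norm (\<Sum>n. ?g n)" by (simp add: dist_norm Ldiff norm_mult nc)
    also have "\<dots> \<le> (\<Sum>n. norm (?g n))" by (rule summable_norm[OF sng])
    also have "\<dots> \<le> (\<Sum>n. dist u v * norm (b N n))" by (rule suminf_le[OF gle sng sg])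
    also have "\<dots> = K N * dist u v" unfolding K_def using suminf_mult[OF snb, of "dist u v" N] by simp
    finally show ?thesis .
  qed
  have Lcont: "continuous_on UNIV (\<lambda>u. norm (L N u))" for N
  proof -
    have "continuous_on UNIV (L N)"
      by (rule lipschitz_on_continuous_on[OF lipschitz_onI[of UNIV "L N" "K N"]]) (use Llip K0 in auto)
    then show ?thesis by (intro continuous_intros)
  qed
  define G where "G M = (\<Union>N. {u. real M < norm (L N u)})" for M :: nat
  have Gopen: "open (G M)" for M
    unfolding G_def by (intro open_UN ballI open_Collect_less continuous_on_const Lcont)
  have Gdense: "closure (G M) = UNIV" for M
  proof -
    have "u0 \<in> closure (G M)" for u0
    proof (unfold closure_approachable, intro allI impI)
      fix \<epsilon> :: real assume e: "\<epsilon> > 0"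
      define \<delta> where "\<delta> = \<epsilon> / 2"
      have d: "\<delta> > 0" "\<delta> < \<epsilon>" unfolding \<delta>_def using e by auto
      define m where "m = 2 + nat \<lceil>real M / \<delta>\<rceil>"
      have m2: "m \<ge> 2" unfolding m_def by simp
      have mT: "real (Q m) \<ge> real M / \<delta>"
      proof -
        have "real M / \<delta> \<le> real (nat \<lceil>real M / \<delta>\<rceil>)" by linarith
        also have "\<dots> \<le> real m" unfolding m_def by simp
        also have "\<dots> \<le> real (Q m)" using Qge(1)[of m] by simp
        finally show ?thesis .
      qed
      have xn: "real (Q m) * \<theta> \<notin> \<int>"
      proof
        assume "real (Q m) * \<theta> \<in> \<int>"
        then have "real (Q m) * \<theta> \<in> \<rat>" using Ints_subset_Rats by blast
        then have "(real (Q m) * \<theta>) / real (Q m) \<in> \<rat>" by (intro Rats_divide) simp_all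
        moreover have "(real (Q m) * \<theta>) / real (Q m) = \<theta>" using Qge(2)[of m] by simp
        ultimately show False using irr by simp
      qed
      obtain N :: nat where N: "norm (1 - cis (2*pi*(real N * (real (Q m) * \<theta>)))) \<ge> 1"
        using big_cis[OF xn] by blast
      have AN: "norm (A N m) \<ge> 1" using N unfolding A_def by (simp add: algebra_simps)
      have zp: "norm z ^ Q m \<ge> 1" using z by (simp add: one_le_power)
      have bm: "norm (b N m) \<ge> real (Q m) + 1"
      proof -
        have "real (Q m) + 1 = 1 * (real (Q m) + 1) * 1" by simp
        also have "\<dots> \<le> norm (A N m) * (real (Q m) + 1) * norm z ^ Q m"
          using AN zp by (intro mult_mono) auto
        finally show ?thesis by (simp add: nb)
      qed
      define vf where "vf j = (if j = Q m then 1 else (0::complex))" for j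
      have vin: "vf \<in> bcontfun" by (rule bcontfun_normI[of _ 1]) (auto simp: vf_def)
      define v :: linfty where "v = Bcontfun vf"
      have vapp: "apply_bcontfun v j = vf j" for j unfolding v_def using Bcontfun_inverse[OF vin] by simp
      have nv: "norm v \<le> 1" by (rule norm_bound) (simp add: vapp vf_def)
      define u1 where "u1 = u0 + \<delta> *\<^sub>R v"
      define u2 where "u2 = u0 - \<delta> *\<^sub>R v"
      have du1: "dist u1 u0 < \<epsilon>" and du2: "dist u2 u0 < \<epsilon>"
      proof -
        have "dist u1 u0 = \<delta> * norm v" unfolding u1_def using d by (simp add: dist_norm)
        also have "\<dots> \<le> \<delta>" using nv d by (simp add: mult_left_le)
        finally show "dist u1 u0 < \<epsilon>" using d by simp
        have "dist u2 u0 = \<delta> * norm v" unfolding u2_def using d by (simp add: dist_norm)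
        also have "\<dots> \<le> \<delta>" using nv d by (simp add: mult_left_le)
        finally show "dist u2 u0 < \<epsilon>" using d by simp
      qed
      have tm: "(apply_bcontfun u1 (Q n) - apply_bcontfun u2 (Q n)) * b N n = (if n = m then of_real (2*\<delta>) * b N m else 0)" for n
      proof (cases "n = m")
        case True then show ?thesis by (simp add: u1_def u2_def vapp vf_def scaleR_conv_of_real algebra_simps)
      next
        case False
        then have "Q n \<noteq> Q m" using Q_inj2[OF m2] unfolding Q_def by blast
        then show ?thesis using False by (simp add: u1_def u2_def vapp vf_def)
      qed
      have "(\<lambda>n. (apply_bcontfun u1 (Q n) - apply_bcontfun u2 (Q n)) * b N n) sums (of_real (2*\<delta>) * b N m)"
        unfolding tm using sums_single[of m "\<lambda>n. of_real (2*\<delta>) * b N m"] by simp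
      then have "L N u1 - L N u2 = c N * (of_real (2*\<delta>) * b N m)" unfolding Ldiff by (simp add: sums_unique[symmetric])
      then have "norm (L N u1 - L N u2) = 2*\<delta> * norm (b N m)" using d by (simp add: norm_mult nc)
      moreover have "2*\<delta> * norm (b N m) > 2 * real M"
      proof -
        have "\<delta> * (real (Q m) + 1) > real M"
        proof -
          have "\<delta> * real (Q m) \<ge> real M" using mT d by (simp add: field_simps)
          then show ?thesis using d by (simp add: algebra_simps)
        qed
        moreover have "\<delta> * norm (b N m) \<ge> \<delta> * (real (Q m) + 1)" using bm d by simp
        ultimately show ?thesis by linarith
      qed
      moreover have "norm (L N u1 - L N u2) \<le> norm (L N u1) + norm (L N u2)" by (rule norm_triangle_ineq4)
      ultimately have "real M < norm (L N u1) \<or> real M < norm (L N u2)" by linarith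
      then have "u1 \<in> G M \<or> u2 \<in> G M" unfolding G_def by blast
      then show "\<exists>y\<in>G M. dist y u0 < \<epsilon>" using du1 du2 by blast
    qed
    then show ?thesis by blast
  qed
  define E where "E = \<Inter> (range G)"
  have gd: "gdelta_in euclidean E"
    unfolding E_def by (rule gdelta_in_Inter) (auto intro!: open_imp_gdelta_in simp: Gopen)
  have cl: "euclidean closure_of \<Inter> (range G) = topspace euclidean"
  proof (rule Baire_category)
    show "completely_metrizable_space (euclidean :: linfty topology) \<or> locally_compact_space (euclidean :: linfty topology) \<and> regular_space (euclidean :: linfty topology)"
      by (rule disjI1, rule linfty_cms)
  qed (auto simp: Gopen Gdense)
  have cE: "closure E = UNIV" using cl unfolding E_def by simp
  have prp: "\<forall>u\<in>E. \<forall>B::real. \<exists>N::nat. norm (deriv (phi (real N * \<theta>) (\<lambda>n. cf_q \<theta> (k n)) u) z) > B"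
  proof (intro ballI allI)
    fix u B assume "u \<in> E"
    obtain M :: nat where M: "B < real M" using reals_Archimedean2 by blast
    have "u \<in> G M" using \<open>u \<in> E\<close> unfolding E_def by blast
    then obtain N where "real M < norm (L N u)" unfolding G_def by blast
    then show "\<exists>N::nat. norm (deriv (phi (real N * \<theta>) (\<lambda>n. cf_q \<theta> (k n)) u) z) > B"
      using M Dl by (intro exI[of _ N]) simp
  qed
  show ?thesis using gd cE prp by blast
qed

end

theorem lemma2p6:
  fixes \<theta> :: real and k :: "nat \<Rightarrow> nat" and z :: complex
  assumes irr: "\<theta> \<notin> \<rat>"
    and growth: "filterlim (\<lambda>n. ln (real (cf_q \<theta> (Suc n))) / real (cf_q \<theta> n)) at_top sequentially"
    and sub: "strict_mono k"
    and z: "norm z > 1"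
  shows "\<exists>E :: linfty set. gdelta_in euclidean E \<and> closure E = UNIV \<and>
           (\<forall>u\<in>E. \<forall>B::real. \<exists>N::nat.
              norm (deriv (phi (real N * \<theta>) (\<lambda>n. cf_q \<theta> (k n)) u) z) > B)"
  using main_ctx[OF irr growth sub z] .

end
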